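(* Let $(x_i^k)$, $(y_i^k)$ ($i=1,\dots,n$) and $(z^k)$ be generated by Algorithm PS (under (A1)–(A7)). Then for every $k\ge0$, every $i\in\{1,\dots,n\}$ and every $(r_i,a_i)$ with $a_i\in A_i(r_i)$, $$\langle r_i-x_i^k,\ y_i^k-(B_i+C_i+D_i)(r_i)-a_i\rangle\le\frac1{4\beta_i}\|x_i^k-G_iz^k\|^2.$$
   Context: Standing setting. Let $\mathcal H_0,\dots,\mathcal H_{n-1}$ be real Hilbert spaces ($n\ge2$) and $\mathcal H_n:=\mathcal H_0$. Conventions: $0\cdot\infty=0$, $r\cdot\infty=\infty$ for $r>0$, $1/\infty=0$, $1/0=\infty$. For each $i=1,\dots,n$: (A1) $G_i:\mathcal H_0\to\mathcal H_i$ is bounded linear and $G_n=I$; (A2) $A_i:\mathcal H_i\rightrightarrows\mathcal H_i$ is maximal monotone; (A3) $B_i:\mathcal H_i\to\mathcal H_i$ is monotone and $\ell_i$-Lipschitz, $\ell_i\in[0,\infty)$; (A4) $C_i:\mathcal H_i\to\mathcal H_i$ is $\beta_i$-cocoercive with $\beta_i\in(0,\infty]$, i.e. $\langle x-y,C_ix-C_iy\rangle\ge\beta_i\|C_ix-C_iy\|^2$ for all $x,y$ (so $\beta_i=\infty$ means $C_i$ is constant, and then $1/(4\beta_i)=0$); (A5) $D_i:\mathcal H_i\to\mathcal H_i$ is monotone and continuously differentiable with $\|D_i'(x)-D_i'(y)\|\le m_i\|x-y\|$ for all $x,y$, $m_i\in[0,\infty)$; (A6) with $T_i:=A_i+B_i+C_i+D_i$,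 the inclusion $0\in\sum_{i=1}^nG_i^*T_i(G_iz)$ has at least one solution $z\in\mathcal H_0$; (A7) there is $\mathcal I_D\subset\{1,\dots,n\}$ with $m_i>0$ for $i\in\mathcal I_D$ and $m_i=0$, $D_i=0$ for $i\notin\mathcal I_D$. Notation: $D_{i,(u)}(x):=D_i(u)+D_i'(u)(x-u)$; for a maximal monotone $S$, $J_S:=(S+I)^{-1}$. $\boldsymbol{\mathcal H}:=\mathcal H_0\times\mathcal H_1\times\cdots\times\mathcal H_{n-1}$ with inner product $\langle p,\tilde p\rangle_\gamma:=\gamma\langle z,\tilde z\rangle+\sum_{i=1}^{n-1}\langle w_i,\tilde w_i\rangle$ for $p=(z,w_1,\dots,w_{n-1})$, $\tilde p=(\tilde z,\tilde w_1,\dots,\tilde w_{n-1})$, and norm $\|\cdot\|_\gamma$; for such $p$ one writes $w_n:=-\sum_{i=1}^{n-1}G_i^*w_i$. The extended solution set is $\mathcal S:=\{p\in\boldsymbol{\mathcal H}: w_i\in T_i(G_iz),\ i=1,\dots,n\}$ (with $w_n$ as just defined). Algorithm PS. Input: $(z^0,w_1^0,\dots,w_{n-1}^0)\in\boldsymbol{\mathcal H}$, $0<\underline\tau<\overline\tau<2$, $0<\underline\theta<\overline\theta<2$, $\hat\rho>0$, $\hat\delta>0$, $\gamma>0$; $w_n^0:=-\sum_{i=1}^{n-1}G_i^*w_i^0$. For $k=0,1,2,\dots$: for each $i=1,\dots,n$ define $(\rho_i^k,x_i^k,y_i^k)$ as follows. (i) If $w_i^k\in T_i(G_iz^k)$: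 $\rho_i^k=\hat\rho$, $x_i^k=G_iz^k$, $y_i^k=w_i^k$. (ii) Otherwise, if $i\in\mathcal I_D$: $\rho_i^k>0$ and $x_i^k=J_{\rho_i^k(A_i+D_{i,(G_iz^k)})}\big(G_iz^k+\rho_i^kw_i^k-\rho_i^k(B_i+C_i)(G_iz^k)\big)$ satisfy $\underline\theta\le4\ell_i^2(\rho_i^k)^2+(\beta_i^{-1}+\hat\delta)\rho_i^k+(m_i\rho_i^k\|x_i^k-G_iz^k\|)^2\le\overline\theta$, and $y_i^k=\frac{G_iz^k-x_i^k}{\rho_i^k}+w_i^k+[B_i(x_i^k)-B_i(G_iz^k)]+[D_i(x_i^k)-D_{i,(G_iz^k)}(x_i^k)]$. (iii) Otherwise ($i\notin\mathcal I_D$): some $\rho_i^k>0$ is chosen, $x_i^k=J_{\rho_i^kA_i}\big(G_iz^k+\rho_i^kw_i^k-\rho_i^k(B_i+C_i)(G_iz^k)\big)$ and $y_i^k=\frac{G_iz^k-x_i^k}{\rho_i^k}+w_i^k+[B_i(x_i^k)-B_i(G_iz^k)]$. Then set $u_i^k=x_i^k-G_ix_n^k$ ($i=1,\dots,n-1$), $v^k=\sum_{i=1}^nG_i^*y_i^k$, $\varphi_k=\langle z^k,v^k\rangle+\sum_{i=1}^{n-1}\langle w_i^k,u_i^k\rangle-\sum_{i=1}^n\big[\langle x_i^k,y_i^k\rangle+\frac1{4\beta_i}\|x_i^k-G_iz^k\|^2\big]$, $\pi_k=\gamma^{-1}\|v^k\|^2+\sum_{i=1}^{n-1}\|u_i^k\|^2$.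 If $\varphi_k>0$: choose $\tau_k\in[\underline\tau,\overline\tau]$, $\alpha_k=\tau_k\varphi_k/\pi_k$, $z^{k+1}=z^k-\gamma^{-1}\alpha_kv^k$, $w_i^{k+1}=w_i^k-\alpha_ku_i^k$ ($i=1,\dots,n-1$); otherwise $z^{k+1}=z^k$, $w_i^{k+1}=w_i^k$. Finally $w_n^{k+1}=-\sum_{i=1}^{n-1}G_i^*w_i^{k+1}$. *)

theory Defs
  imports "HOL-Analysis.Analysis"
begin

text \<open>All Hilbert spaces H_0,...,H_{n-1} are modelled as closed linear subspaces
  of one ambient real Hilbert space of type 'a; operators are considered on these
  carriers only.\<close>

definition bounded_linear_on :: "'a::real_normed_vector set \<Rightarrow> 'b::real_normed_vector set \<Rightarrow> ('a \<Rightarrow> 'b) \<Rightarrow> bool" where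
  "bounded_linear_on S T f \<longleftrightarrow>
     (\<forall>x\<in>S. f x \<in> T) \<and> (\<forall>x\<in>S. \<forall>y\<in>S. f (x + y) = f x + f y) \<and>
     (\<forall>c. \<forall>x\<in>S. f (c *\<^sub>R x) = c *\<^sub>R f x) \<and> (\<exists>K. \<forall>x\<in>S. norm (f x) \<le> K * norm x)"

definition adjoint_on :: "'a::real_inner set \<Rightarrow> ('a \<Rightarrow> 'a) \<Rightarrow> 'a \<Rightarrow> 'a" where
  "adjoint_on S G w = (THE v. v \<in> S \<and> (\<forall>z\<in>S. inner (G z) w = inner z v))"

definition mono_op :: "'a::real_inner set \<Rightarrow> ('a \<Rightarrow> 'a set) \<Rightarrow> bool" where
  "mono_op H A \<longleftrightarrow> (\<forall>x. A x \<noteq> {} \<longrightarrow> x \<in> H) \<and> (\<forall>x. A x \<subseteq> H) \<and>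
     (\<forall>x y u v. u \<in> A x \<longrightarrow> v \<in> A y \<longrightarrow> inner (x - y) (u - v) \<ge> 0)"

definition maximal_monotone_op :: "'a::real_inner set \<Rightarrow> ('a \<Rightarrow> 'a set) \<Rightarrow> bool" where
  "maximal_monotone_op H A \<longleftrightarrow> mono_op H A \<and>
     (\<forall>x\<in>H. \<forall>u\<in>H. (\<forall>y v. v \<in> A y \<longrightarrow> inner (x - y) (u - v) \<ge> 0) \<longrightarrow> u \<in> A x)"

definition mono_fun :: "'a::real_inner set \<Rightarrow> ('a \<Rightarrow> 'a) \<Rightarrow> bool" where
  "mono_fun H B \<longleftrightarrow> (\<forall>x\<in>H. B x \<in> H) \<and> (\<forall>x\<in>H. \<forall>y\<in>H. inner (x - y) (B x - B y) \<ge> 0)"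

definition lipschitz_fun :: "'a::real_normed_vector set \<Rightarrow> real \<Rightarrow> ('a \<Rightarrow> 'a) \<Rightarrow> bool" where
  "lipschitz_fun H l B \<longleftrightarrow> (\<forall>x\<in>H. \<forall>y\<in>H. norm (B x - B y) \<le> l * norm (x - y))"

text \<open>beta-cocoercivity with beta in (0,\<infinity>], using extended-real arithmetic
  (\<infinity> * 0 = 0, \<infinity> * r = \<infinity> for r > 0).\<close>
definition cocoercive_on :: "'a::real_inner set \<Rightarrow> ereal \<Rightarrow> ('a \<Rightarrow> 'a) \<Rightarrow> bool" where
  "cocoercive_on H \<beta> C \<longleftrightarrow> (\<forall>x\<in>H. C x \<in> H) \<and>
     (\<forall>x\<in>H. \<forall>y\<in>H. \<beta> * ereal ((norm (C x - C y))\<^sup>2) \<le> ereal (inner (x - y) (C x - C y)))"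

text \<open>1/beta with 1/\<infinity> = 0.\<close>
definition binv :: "ereal \<Rightarrow> real" where
  "binv \<beta> = real_of_ereal (inverse \<beta>)"

definition T_op :: "('a::real_vector \<Rightarrow> 'a set) \<Rightarrow> ('a \<Rightarrow> 'a) \<Rightarrow> ('a \<Rightarrow> 'a) \<Rightarrow> ('a \<Rightarrow> 'a) \<Rightarrow> 'a \<Rightarrow> 'a set" where
  "T_op A B C D x = (\<lambda>a. a + B x + C x + D x) ` A x"

definition lin_D :: "('a::real_vector \<Rightarrow> 'a) \<Rightarrow> ('a \<Rightarrow> 'a \<Rightarrow> 'a) \<Rightarrow> 'a \<Rightarrow> 'a \<Rightarrow> 'a" where
  "lin_D D D' u x = D u + D' u (x - u)"

text \<open>Resolvent J_S = (S + I)^{-1}, as the (set-valued) inverse operator.\<close>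
definition resolvent :: "('a::real_vector \<Rightarrow> 'a set) \<Rightarrow> 'a \<Rightarrow> 'a set" where
  "resolvent S u = {x. u \<in> (\<lambda>s. s + x) ` S x}"

text \<open>One block i of iteration k of Algorithm PS; g = G_i z^k, w = w_i^k.\<close>
definition PS_block :: "bool \<Rightarrow> real \<Rightarrow> real \<Rightarrow> real \<Rightarrow> ('a::real_inner \<Rightarrow> 'a set) \<Rightarrow> ('a \<Rightarrow> 'a) \<Rightarrow> ('a \<Rightarrow> 'a)
   \<Rightarrow> ('a \<Rightarrow> 'a) \<Rightarrow> ('a \<Rightarrow> 'a \<Rightarrow> 'a) \<Rightarrow> real \<Rightarrow> real \<Rightarrow> real \<Rightarrow> real
   \<Rightarrow> 'a \<Rightarrow> 'a \<Rightarrow> real \<Rightarrow> 'a \<Rightarrow> 'a \<Rightarrow> bool" where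
  "PS_block inD l bi m A B C D D' \<theta>lo \<theta>hi \<rho>hat \<delta>hat g w \<rho> x y \<longleftrightarrow>
    (if w \<in> T_op A B C D g then \<rho> = \<rho>hat \<and> x = g \<and> y = w
     else if inD then
       \<rho> > 0 \<and>
       x \<in> resolvent (\<lambda>p. (\<lambda>a. \<rho> *\<^sub>R (a + lin_D D D' g p)) ` A p)
                       (g + \<rho> *\<^sub>R w - \<rho> *\<^sub>R (B g + C g)) \<and>
       \<theta>lo \<le> 4 * l\<^sup>2 * \<rho>\<^sup>2 + (bi + \<delta>hat) * \<rho> + (m * \<rho> * norm (x - g))\<^sup>2 \<and>
       4 * l\<^sup>2 * \<rho>\<^sup>2 + (bi + \<delta>hat) * \<rho> + (m * \<rho> * norm (x - g))\<^sup>2 \<le> \<theta>hi \<and>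
       y = (1 / \<rho>) *\<^sub>R (g - x) + w + (B x - B g) + (D x - lin_D D D' g x)
     else
       \<rho> > 0 \<and>
       x \<in> resolvent (\<lambda>p. (\<lambda>a. \<rho> *\<^sub>R a) ` A p) (g + \<rho> *\<^sub>R w - \<rho> *\<^sub>R (B g + C g)) \<and>
       y = (1 / \<rho>) *\<^sub>R (g - x) + w + (B x - B g))"

text \<open>Projection step of iteration k (indices i = 1..n, w_i for i = 1..n-1).\<close>
definition PS_update :: "nat \<Rightarrow> 'a::real_inner set \<Rightarrow> (nat \<Rightarrow> 'a \<Rightarrow> 'a) \<Rightarrow> (nat \<Rightarrow> real)
   \<Rightarrow> real \<Rightarrow> real \<Rightarrow> real
   \<Rightarrow> 'a \<Rightarrow> (nat \<Rightarrow> 'a) \<Rightarrow> (nat \<Rightarrow> 'a) \<Rightarrow> (nat \<Rightarrow> 'a) \<Rightarrow> 'a \<Rightarrow> (nat \<Rightarrow> 'a) \<Rightarrow> bool" where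
  "PS_update n H0 G bi \<tau>lo \<tau>hi \<gamma> z w x y z' w' \<longleftrightarrow>
    (let u = (\<lambda>i. x i - G i (x n));
         v = (\<Sum>i=1..n. adjoint_on H0 (G i) (y i));
         \<phi> = inner z v + (\<Sum>i=1..n-1. inner (w i) (u i))
             - (\<Sum>i=1..n. inner (x i) (y i) + bi i / 4 * (norm (x i - G i z))\<^sup>2);
         \<pi> = (norm v)\<^sup>2 / \<gamma> + (\<Sum>i=1..n-1. (norm (u i))\<^sup>2)
     in if \<phi> > 0 then
          (\<exists>\<tau>\<in>{\<tau>lo..\<tau>hi}. let \<alpha> = \<tau> * \<phi> / \<pi> in
             z' = z - (\<alpha> / \<gamma>) *\<^sub>R v \<and> (\<forall>i\<in>{1..n-1}. w' i = w i - \<alpha> *\<^sub>R u i))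
        else z' = z \<and> (\<forall>i\<in>{1..n-1}. w' i = w i))"

end

theory Submission imports Defs begin

lemma riesz_subspace:
  fixes S :: "'a::{real_inner,complete_space} set" and f :: "'a \<Rightarrow> real"
  assumes S: "subspace S" "closed S"
  and add: "\<forall>x\<in>S. \<forall>y\<in>S. f (x+y) = f x + f y"
  and scal: "\<forall>c. \<forall>x\<in>S. f (c *\<^sub>R x) = c * f x"
  and bnd: "\<forall>x\<in>S. \<bar>f x\<bar> \<le> K * norm x"
  shows "\<exists>v\<in>S. \<forall>z\<in>S. f z = inner z v"
proof -
  have diff: "f (x - y) = f x - f y" if "x \<in> S" "y \<in> S" for x y
    using add that S(1) by (metis add_diff_cancel_left' diff_add_cancel eq_diff_eq subspace_diff)
  define F where "F z = (norm z)\<^sup>2 / 2 - f z" for z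
  have Flow: "- (K\<^sup>2) / 2 \<le> F z" if "z \<in> S" for z
  proof -
    have "f z \<le> K * norm z" using bnd that by force
    moreover have "0 \<le> (norm z - K)\<^sup>2" by simp
    ultimately show ?thesis unfolding F_def by (simp add: power2_eq_square algebra_simps)
  qed
  have S0: "0 \<in> S" using S(1) subspace_0 by blast
  define d where "d = Inf (F ` S)"
  have bdd: "bdd_below (F ` S)" using Flow by (meson bdd_belowI2)
  have dle: "d \<le> F z" if "z \<in> S" for z unfolding d_def using bdd that by (simp add: cInf_lower)
  have "\<exists>z\<in>S. F z < d + inverse (real (Suc n))" for n
  proof -
    have "Inf (F ` S) < d + inverse (real (Suc n))" unfolding d_def by simp
    then show ?thesis using S0 by (subst (asm) cInf_less_iff) (auto simp: bdd)
  qed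
  then obtain zs where zs: "\<And>n. zs n \<in> S" "\<And>n. F (zs n) < d + inverse (real (Suc n))"
    by metis
  have mid: "F a + F b - 2 * F ((1/2) *\<^sub>R (a + b)) = (norm (a - b))\<^sup>2 / 4"
    if "a \<in> S" "b \<in> S" for a b
  proof -
    have ab: "a + b \<in> S" using that S(1) by (simp add: subspace_add)
    have "f ((1/2) *\<^sub>R (a + b)) = (1/2) * (f a + f b)" using add scal that ab by simp
    moreover have "(norm a)\<^sup>2 / 2 + (norm b)\<^sup>2 / 2 - 2 * ((norm ((1/2) *\<^sub>R (a + b)))\<^sup>2 / 2)
        = (norm (a - b))\<^sup>2 / 4"
      by (simp add: power2_norm_eq_inner inner_add_left inner_add_right inner_diff_left
          inner_diff_right inner_commute algebra_simps)
    ultimately show ?thesis unfolding F_def by (simp add: algebra_simps)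
  qed
  have dbound: "(norm (zs m - zs n))\<^sup>2 \<le> 4 * (inverse (real (Suc m)) + inverse (real (Suc n)))" for m n
  proof -
    have "(1/2) *\<^sub>R (zs m + zs n) \<in> S" using zs(1) S(1) by (simp add: subspace_add subspace_scale)
    then have "d \<le> F ((1/2) *\<^sub>R (zs m + zs n))" by (rule dle)
    moreover note mid[OF zs(1) zs(1), of m n] zs(2)[of m] zs(2)[of n]
    moreover have "\<And>(a::real) b c e u v w. a + b - 2 * c = w / 4 \<Longrightarrow> a < e + u \<Longrightarrow> b < e + v \<Longrightarrow> e \<le> c \<Longrightarrow> w \<le> 4 * (u + v)"
      by (simp add: field_simps)
    ultimately show ?thesis by blast
  qed
  have "Cauchy zs"
  proof (rule metric_CauchyI)
    fix e :: real assume e: "0 < e"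
    obtain M :: nat where M: "8 / e\<^sup>2 < real M" using reals_Archimedean2 by blast
    have Mpos: "0 < real M" using M e by (smt (verit) divide_pos_pos zero_less_power)
    show "\<exists>M. \<forall>m\<ge>M. \<forall>n\<ge>M. dist (zs m) (zs n) < e"
    proof (intro exI allI impI)
      fix m n assume mn: "M \<le> m" "M \<le> n"
      have i1: "inverse (real (Suc m)) \<le> inverse (real M)" using mn Mpos
        by (simp add: le_imp_inverse_le)
      have i2: "inverse (real (Suc n)) \<le> inverse (real M)" using mn Mpos
        by (simp add: le_imp_inverse_le)
      have "8 * inverse (real M) < e\<^sup>2" using M e Mpos
        by (simp add: field_simps)
      then have "(dist (zs m) (zs n))\<^sup>2 < e\<^sup>2"
        using dbound[of m n] i1 i2 by (simp add: dist_norm)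
      then show "dist (zs m) (zs n) < e" using e by (simp add: power_less_imp_less_base)
    qed
  qed
  then obtain L where L: "zs \<longlonglongrightarrow> L" using Cauchy_convergent convergent_def by blast
  have LS: "L \<in> S" using closed_sequentially[OF S(2) zs(1) L] .
  have fl: "(\<lambda>n. f (zs n)) \<longlonglongrightarrow> f L"
  proof -
    have "(\<lambda>n. f (zs n) - f L) \<longlonglongrightarrow> 0"
    proof (rule Lim_null_comparison)
      show "\<forall>\<^sub>F n in sequentially. norm (f (zs n) - f L) \<le> K * norm (zs n - L)"
      proof (intro always_eventually allI)
        fix n
        have "zs n - L \<in> S" using zs(1) LS S(1) by (simp add: subspace_diff)
        then have "\<bar>f (zs n - L)\<bar> \<le> K * norm (zs n - L)" using bnd by blast
        then show "norm (f (zs n) - f L) \<le> K * norm (zs n - L)" using diff[OF zs(1) LS] by simp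
      qed
      have "(\<lambda>n. norm (zs n - L)) \<longlonglongrightarrow> 0" using L by (simp add: LIM_zero tendsto_norm_zero)
      then show "(\<lambda>n. K * norm (zs n - L)) \<longlonglongrightarrow> 0" by (metis mult_zero_right tendsto_mult_left)
    qed
    then show ?thesis by (simp add: LIM_zero_cancel)
  qed
  have FL: "(\<lambda>n. F (zs n)) \<longlonglongrightarrow> F L" unfolding F_def
    by (intro tendsto_intros L fl) auto
  have "F L \<le> d"
  proof (rule LIMSEQ_le[OF FL])
    show "(\<lambda>n. d + inverse (real (Suc n))) \<longlonglongrightarrow> d"
      using tendsto_add[OF tendsto_const LIMSEQ_inverse_real_of_nat] by simp
    show "\<exists>N. \<forall>n\<ge>N. F (zs n) \<le> d + inverse (real (Suc n))" using zs(2) less_imp_le by blast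
  qed
  have opt: "F L \<le> F (L + t *\<^sub>R h)" if "h \<in> S" for h t
    using \<open>F L \<le> d\<close> dle[of "L + t *\<^sub>R h"] that LS S(1) by (simp add: subspace_add subspace_scale)
  show ?thesis
  proof (intro bexI[OF _ LS] ballI)
    fix h assume h: "h \<in> S"
    define c where "c = inner L h - f h"
    define q where "q = (norm h)\<^sup>2 / 2"
    have q0: "0 \<le> q" unfolding q_def by simp
    have exp: "F (L + t *\<^sub>R h) = F L + t * c + t\<^sup>2 * q" for t
    proof -
      have "f (L + t *\<^sub>R h) = f L + t * f h" using add scal h LS S(1) by (simp add: subspace_scale)
      moreover have "(norm (L + t *\<^sub>R h))\<^sup>2 = (norm L)\<^sup>2 + 2 * t * inner L h + t\<^sup>2 * (norm h)\<^sup>2"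
      proof -
        have "(norm (L + t *\<^sub>R h))\<^sup>2 = inner (L + t *\<^sub>R h) (L + t *\<^sub>R h)"
          by (rule power2_norm_eq_inner)
        also have "\<dots> = inner L L + 2 * t * inner L h + t\<^sup>2 * inner h h"
          by (simp add: inner_add_left inner_add_right inner_commute algebra_simps power2_eq_square)
        finally show ?thesis by (simp add: power2_norm_eq_inner)
      qed
      ultimately show ?thesis unfolding F_def c_def q_def by (simp add: algebra_simps)
    qed
    define t where "t = - c / (q + 1)"
    have qq: "q + 1 \<noteq> 0" using q0 by linarith
    have tq: "t * (q + 1) = - c" unfolding t_def using qq by simp
    have "0 \<le> t * c + t\<^sup>2 * q"
      using opt[OF h, of t] exp[of t] by simp
    also have "t * c + t\<^sup>2 * q = - t\<^sup>2"
    proof -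
      have "t * q = - c - t" using tq by (simp add: algebra_simps)
      then have "t * (t * q) = t * (- c - t)" by simp
      then have "t\<^sup>2 * q = t * (- c - t)" by (simp add: power2_eq_square algebra_simps)
      then show ?thesis by (simp add: power2_eq_square algebra_simps)
    qed
    finally have "t = 0" by simp
    then have "c = 0" using tq by simp
    then show "f h = inner h L" unfolding c_def by (simp add: inner_commute)
  qed
qed

lemma adj_in:
  fixes S :: "'a::{real_inner,complete_space} set"
  assumes S: "subspace S" "closed S" and G: "bounded_linear_on S T G"
  shows "adjoint_on S G w \<in> S"
proof -
  from G obtain K where add: "\<forall>x\<in>S. \<forall>y\<in>S. G (x + y) = G x + G y"
    and sc: "\<forall>c. \<forall>x\<in>S. G (c *\<^sub>R x) = c *\<^sub>R G x" and K: "\<forall>x\<in>S. norm (G x) \<le> K * norm x"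
    unfolding bounded_linear_on_def by blast
  have "\<exists>v\<in>S. \<forall>z\<in>S. inner (G z) w = inner z v"
  proof (rule riesz_subspace[OF S, where K = "K * norm w"])
    show "\<forall>x\<in>S. \<forall>y\<in>S. inner (G (x + y)) w = inner (G x) w + inner (G y) w"
      using add by (simp add: inner_add_left)
    show "\<forall>c. \<forall>x\<in>S. inner (G (c *\<^sub>R x)) w = c * inner (G x) w"
      using sc by simp
    show "\<forall>x\<in>S. \<bar>inner (G x) w\<bar> \<le> K * norm w * norm x"
    proof
      fix x assume x: "x \<in> S"
      have "\<bar>inner (G x) w\<bar> \<le> norm (G x) * norm w" by (rule Cauchy_Schwarz_ineq2)
      also have "\<dots> \<le> K * norm x * norm w" using K x by (simp add: mult_right_mono)
      finally show "\<bar>inner (G x) w\<bar> \<le> K * norm w * norm x" by (simp add: algebra_simps)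
    qed
  qed
  then obtain v where v: "v \<in> S" "\<forall>z\<in>S. inner (G z) w = inner z v" by blast
  have uniq: "u = v" if "u \<in> S" "\<forall>z\<in>S. inner (G z) w = inner z u" for u
  proof -
    have "u - v \<in> S" using that v S(1) by (simp add: subspace_diff)
    then have "inner (u - v) u = inner (u - v) v" using that v by metis
    then have "inner (u - v) (u - v) = 0" by (simp add: inner_diff_right)
    then show ?thesis by simp
  qed
  have "(THE v. v \<in> S \<and> (\<forall>z\<in>S. inner (G z) w = inner z v)) = v"
    using v uniq by (intro the_equality) auto
  then show ?thesis unfolding adjoint_on_def using v by simp
qed

lemma coco_bound:
  assumes b: "\<beta> > 0" and C: "cocoercive_on H \<beta> C" and g: "g \<in> H" and r: "r \<in> H"
  shows "inner (r - x) (C g - C r) \<le> binv \<beta> / 4 * (norm (x - g))\<^sup>2"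
proof -
  have co: "\<beta> * ereal ((norm (C g - C r))\<^sup>2) \<le> ereal (inner (g - r) (C g - C r))"
    using C g r unfolding cocoercive_on_def by blast
  have split: "inner (r - x) (C g - C r) = - inner (g - r) (C g - C r) + inner (g - x) (C g - C r)"
    by (simp add: inner_diff_left algebra_simps)
  have cs: "inner (g - x) (C g - C r) \<le> norm (x - g) * norm (C g - C r)"
    by (metis Cauchy_Schwarz_ineq2 abs_le_D1 norm_minus_commute)
  show ?thesis
  proof (cases \<beta>)
    case (real bb)
    with b have bb: "bb > 0" by simp
    have binv: "binv \<beta> = 1 / bb" using real bb unfolding binv_def by (simp add: inverse_eq_divide)
    have co': "bb * (norm (C g - C r))\<^sup>2 \<le> inner (g - r) (C g - C r)" using co real by simp
    define s where "s = norm (x - g)"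
    define t where "t = norm (C g - C r)"
    have key: "- bb * t\<^sup>2 + s * t \<le> s\<^sup>2 / (4 * bb)"
    proof -
      have "0 \<le> (2 * bb * t - s)\<^sup>2" by simp
      then have "0 \<le> 4 * bb\<^sup>2 * t\<^sup>2 - 4 * bb * s * t + s\<^sup>2" by (simp add: power2_eq_square algebra_simps)
      then have "4 * bb * (- bb * t\<^sup>2 + s * t) \<le> s\<^sup>2" by (simp add: power2_eq_square algebra_simps)
      then show ?thesis using bb by (simp add: field_simps)
    qed
    have "inner (r - x) (C g - C r) \<le> - bb * t\<^sup>2 + s * t"
      using split cs co' unfolding s_def t_def by linarith
    also have "\<dots> \<le> s\<^sup>2 / (4 * bb)" by (rule key)
    also have "\<dots> = binv \<beta> / 4 * (norm (x - g))\<^sup>2" unfolding binv s_def by simp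
    finally show ?thesis .
  next
    case PInf
    have "C g - C r = 0"
    proof (rule ccontr)
      assume "C g - C r \<noteq> 0"
      then have "(norm (C g - C r))\<^sup>2 > 0" by simp
      then have "\<beta> * ereal ((norm (C g - C r))\<^sup>2) = \<infinity>" using PInf by simp
      with co show False by simp
    qed
    then show ?thesis using PInf unfolding binv_def by simp
  next
    case MInf with b show ?thesis by simp
  qed
qed

lemma core:
  assumes Amo: "mono_op H A" and Bm: "mono_fun H B" and Dm: "mono_fun H D"
    and b: "\<beta> > 0" and C: "cocoercive_on H \<beta> C"
    and x: "x \<in> H" and g: "g \<in> H" and a': "a' \<in> A x" and a: "a \<in> A r"
  shows "inner (r - x) ((a' + B x + D x + C g) - (B r + C r + D r) - a)
           \<le> binv \<beta> / 4 * (norm (x - g))\<^sup>2"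
proof -
  have r: "r \<in> H" using Amo a unfolding mono_op_def by blast
  have m1: "0 \<le> inner (x - r) (a' - a)" using Amo a a' unfolding mono_op_def by blast
  have m2: "0 \<le> inner (x - r) (B x - B r)" using Bm x r unfolding mono_fun_def by blast
  have m3: "0 \<le> inner (x - r) (D x - D r)" using Dm x r unfolding mono_fun_def by blast
  have c: "inner (r - x) (C g - C r) \<le> binv \<beta> / 4 * (norm (x - g))\<^sup>2"
    by (rule coco_bound[OF b C g r])
  have eq: "inner (r - x) ((a' + B x + D x + C g) - (B r + C r + D r) - a)
     = - inner (x - r) (a' - a) - inner (x - r) (B x - B r) - inner (x - r) (D x - D r)
       + inner (r - x) (C g - C r)"
    by (simp add: inner_diff_left inner_diff_right inner_add_right algebra_simps)
  show ?thesis using eq m1 m2 m3 c by linarith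
qed

lemma y_eq2:
  fixes x y g w a' L Bx Bg Cg Dx :: "'a::real_vector"
  assumes r: "\<rho> > 0" and u: "g + \<rho> *\<^sub>R w - \<rho> *\<^sub>R (Bg + Cg) = \<rho> *\<^sub>R (a' + L) + x"
    and y: "y = (1 / \<rho>) *\<^sub>R (g - x) + w + (Bx - Bg) + (Dx - L)"
  shows "y = a' + Bx + Dx + Cg"
proof -
  have "\<rho> *\<^sub>R y = (g - x) + \<rho> *\<^sub>R w + \<rho> *\<^sub>R (Bx - Bg) + \<rho> *\<^sub>R (Dx - L)"
    using r y by (simp add: scaleR_add_right)
  also have "\<dots> = \<rho> *\<^sub>R (a' + Bx + Dx + Cg)"
  proof -
    have "g - x = \<rho> *\<^sub>R (a' + L) - \<rho> *\<^sub>R w + \<rho> *\<^sub>R (Bg + Cg)" using u by (simp add: algebra_simps)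
    then show ?thesis by (simp add: algebra_simps)
  qed
  finally show ?thesis using r by simp
qed

lemma y_eq3:
  fixes x y g w a' Bx Bg Cg Dx :: "'a::real_vector"
  assumes r: "\<rho> > 0" and u: "g + \<rho> *\<^sub>R w - \<rho> *\<^sub>R (Bg + Cg) = \<rho> *\<^sub>R a' + x"
    and y: "y = (1 / \<rho>) *\<^sub>R (g - x) + w + (Bx - Bg)" and D: "Dx = 0"
  shows "y = a' + Bx + Dx + Cg"
  using y_eq2[OF r _ , of g w Bg Cg a' 0 x y Bx Dx] u y D by simp

theorem lemma4p1:
  fixes n :: nat and H :: "nat \<Rightarrow> 'a::{real_inner,complete_space} set"
    and G :: "nat \<Rightarrow> 'a \<Rightarrow> 'a" and A :: "nat \<Rightarrow> 'a \<Rightarrow> 'a set"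
    and B C D :: "nat \<Rightarrow> 'a \<Rightarrow> 'a" and D' :: "nat \<Rightarrow> 'a \<Rightarrow> 'a \<Rightarrow> 'a"
    and l m :: "nat \<Rightarrow> real" and \<beta> :: "nat \<Rightarrow> ereal" and ID :: "nat set"
    and \<tau>lo \<tau>hi \<theta>lo \<theta>hi \<rho>hat \<delta>hat \<gamma> :: real
    and z :: "nat \<Rightarrow> 'a" and w x y :: "nat \<Rightarrow> nat \<Rightarrow> 'a" and \<rho> :: "nat \<Rightarrow> nat \<Rightarrow> real"
  assumes n2: "n \<ge> 2"
    and Hspaces: "\<forall>i<n. subspace (H i) \<and> closed (H i)" and Hn: "H n = H 0"
    and A1: "\<forall>i\<in>{1..n}. bounded_linear_on (H 0) (H i) (G i)" and A1n: "\<forall>s\<in>H 0. G n s = s"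
    and A2: "\<forall>i\<in>{1..n}. maximal_monotone_op (H i) (A i)"
    and A3: "\<forall>i\<in>{1..n}. l i \<ge> 0 \<and> mono_fun (H i) (B i) \<and> lipschitz_fun (H i) (l i) (B i)"
    and A4: "\<forall>i\<in>{1..n}. \<beta> i > 0 \<and> cocoercive_on (H i) (\<beta> i) (C i)"
    and A5: "\<forall>i\<in>{1..n}. m i \<ge> 0 \<and> mono_fun (H i) (D i) \<and>
              (\<forall>u\<in>H i. (D i has_derivative D' i u) (at u within H i)) \<and>
              (\<forall>u\<in>H i. \<forall>v\<in>H i. \<forall>h\<in>H i. norm (D' i u h - D' i v h) \<le> m i * norm (u - v) * norm h)"
    and A6: "\<exists>s\<in>H 0. \<exists>v. (\<forall>i\<in>{1..n}. v i \<in> T_op (A i) (B i) (C i) (D i) (G i s)) \<and>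
              (\<Sum>i=1..n. adjoint_on (H 0) (G i) (v i)) = 0"
    and A7: "ID \<subseteq> {1..n}" "\<forall>i\<in>ID. m i > 0" "\<forall>i\<in>{1..n} - ID. m i = 0 \<and> (\<forall>u\<in>H i. D i u = 0)"
    and par: "0 < \<tau>lo" "\<tau>lo < \<tau>hi" "\<tau>hi < 2" "0 < \<theta>lo" "\<theta>lo < \<theta>hi" "\<theta>hi < 2"
             "\<rho>hat > 0" "\<delta>hat > 0" "\<gamma> > 0"
    and init: "z 0 \<in> H 0" "\<forall>i\<in>{1..n-1}. w 0 i \<in> H i"
    and wn: "\<forall>k. w k n = - (\<Sum>i=1..n-1. adjoint_on (H 0) (G i) (w k i))"
    and blocks: "\<forall>k. \<forall>i\<in>{1..n}. PS_block (i \<in> ID) (l i) (binv (\<beta> i)) (m i) (A i) (B i) (C i) (D i) (D' i)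
                   \<theta>lo \<theta>hi \<rho>hat \<delta>hat (G i (z k)) (w k i) (\<rho> k i) (x k i) (y k i)"
    and update: "\<forall>k. PS_update n (H 0) G (\<lambda>i. binv (\<beta> i)) \<tau>lo \<tau>hi \<gamma>
                   (z k) (w k) (x k) (y k) (z (Suc k)) (w (Suc k))"
  shows "\<forall>k. \<forall>i\<in>{1..n}. \<forall>r a. a \<in> A i r \<longrightarrow>
           inner (r - x k i) (y k i - (B i r + C i r + D i r) - a)
             \<le> binv (\<beta> i) / 4 * (norm (x k i - G i (z k)))\<^sup>2"
proof (intro allI ballI impI)
  fix k i r a assume i: "i \<in> {1..n}" and a: "a \<in> A i r"
  have H0: "subspace (H 0)" "closed (H 0)" using Hspaces n2 by auto
  have zH: "z k \<in> H 0" for k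
  proof (induction k)
    case 0 show ?case using init by simp
  next
    case (Suc k)
    define v where "v = (\<Sum>j=1..n. adjoint_on (H 0) (G j) (y k j))"
    have "\<forall>j\<in>{1..n}. adjoint_on (H 0) (G j) (y k j) \<in> H 0" using adj_in[OF H0] A1 by blast
    then have vH: "v \<in> H 0" unfolding v_def by (intro subspace_sum[OF H0(1)]) blast
    have "z (Suc k) = z k \<or> (\<exists>c. z (Suc k) = z k - c *\<^sub>R v)"
      using update[rule_format, of k] unfolding PS_update_def Let_def v_def
      by (auto split: if_splits)
    then show ?case using Suc vH H0(1) by (auto simp: subspace_diff subspace_scale)
  qed
  define g where "g = G i (z k)"
  have gH: "g \<in> H i" using A1 i zH[of k] unfolding g_def bounded_linear_on_def by blast
  have Amo: "mono_op (H i) (A i)" using A2 i unfolding maximal_monotone_op_def by blast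
  have Bm: "mono_fun (H i) (B i)" using A3 i by blast
  have Dm: "mono_fun (H i) (D i)" using A5 i by blast
  have b: "\<beta> i > 0" and C: "cocoercive_on (H i) (\<beta> i) (C i)" using A4 i by auto
  have blk: "PS_block (i \<in> ID) (l i) (binv (\<beta> i)) (m i) (A i) (B i) (C i) (D i) (D' i)
                   \<theta>lo \<theta>hi \<rho>hat \<delta>hat g (w k i) (\<rho> k i) (x k i) (y k i)"
    using blocks i unfolding g_def by blast
  have main: "\<exists>a'. a' \<in> A i (x k i) \<and> x k i \<in> H i \<and> y k i = a' + B i (x k i) + D i (x k i) + C i g"
  proof (cases "w k i \<in> T_op (A i) (B i) (C i) (D i) g")
    case True
    then have xy: "x k i = g" "y k i = w k i" using blk unfolding PS_block_def by auto
    from True obtain a' where a': "a' \<in> A i g" "w k i = a' + B i g + C i g + D i g"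
      unfolding T_op_def by blast
    show ?thesis using xy a' gH by (intro exI[of _ a']) (simp add: algebra_simps)
  next
    case False
    show ?thesis
    proof (cases "i \<in> ID")
      case True
      with False blk have r: "\<rho> k i > 0"
        and xr: "x k i \<in> resolvent (\<lambda>p. (\<lambda>a. \<rho> k i *\<^sub>R (a + lin_D (D i) (D' i) g p)) ` A i p)
                       (g + \<rho> k i *\<^sub>R w k i - \<rho> k i *\<^sub>R (B i g + C i g))"
        and y: "y k i = (1 / \<rho> k i) *\<^sub>R (g - x k i) + w k i + (B i (x k i) - B i g)
                 + (D i (x k i) - lin_D (D i) (D' i) g (x k i))"
        unfolding PS_block_def by auto
      from xr obtain a' where a': "a' \<in> A i (x k i)"
        and u: "g + \<rho> k i *\<^sub>R w k i - \<rho> k i *\<^sub>R (B i g + C i g)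
                = \<rho> k i *\<^sub>R (a' + lin_D (D i) (D' i) g (x k i)) + x k i"
        unfolding resolvent_def by auto
      have xH: "x k i \<in> H i" using Amo a' unfolding mono_op_def by blast
      show ?thesis using y_eq2[OF r u y] a' xH by blast
    next
      case nD: False
      with False blk have r: "\<rho> k i > 0"
        and xr: "x k i \<in> resolvent (\<lambda>p. (\<lambda>a. \<rho> k i *\<^sub>R a) ` A i p)
                       (g + \<rho> k i *\<^sub>R w k i - \<rho> k i *\<^sub>R (B i g + C i g))"
        and y: "y k i = (1 / \<rho> k i) *\<^sub>R (g - x k i) + w k i + (B i (x k i) - B i g)"
        unfolding PS_block_def by auto
      from xr obtain a' where a': "a' \<in> A i (x k i)"
        and u: "g + \<rho> k i *\<^sub>R w k i - \<rho> k i *\<^sub>R (B i g + C i g)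
                = \<rho> k i *\<^sub>R a' + x k i"
        unfolding resolvent_def by auto
      have xH: "x k i \<in> H i" using Amo a' unfolding mono_op_def by blast
      have D0: "D i (x k i) = 0" using A7(3) i nD xH by blast
      show ?thesis using y_eq3[OF r u y D0] a' xH by blast
    qed
  qed
  then obtain a' where a': "a' \<in> A i (x k i)" "x k i \<in> H i"
    "y k i = a' + B i (x k i) + D i (x k i) + C i g" by blast
  show "inner (r - x k i) (y k i - (B i r + C i r + D i r) - a)
             \<le> binv (\<beta> i) / 4 * (norm (x k i - G i (z k)))\<^sup>2"
    using core[OF Amo Bm Dm b C a'(2) gH a'(1) a] a'(3) unfolding g_def by simp
qed

end
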